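(* Let $\Gamma=((V,E),m)$ be an EAFC system with $V$ finite, $G=G_\Gamma$ and $S\subseteq V$. Then $QZ_G(G_S)=\bigcap_{s\in S}QZ_G(G_{\{s\}})$; that is, if $g\in G$ satisfies $gSg^{-1}=S$ then $gsg^{-1}=s$ for every $s\in S$. Moreover, for every $g\in N_G(G_S)\setminus G_S$ there exists $g'\in N_G(G_S)$ with $g'G_S=gG_S$ such that $g'$ commutes with every element of $G_S$.
   Context: An Artin–Tits system $\Gamma=((V,E),m)$ consists of a simplicial graph $(V,E)$ and a labelling $m\colon E\to\{2,3,\dots\}$; $G_\Gamma=\langle V \mid \mathrm{prod}(u,v,m(\{u,v\}))=\mathrm{prod}(v,u,m(\{u,v\}))\ \forall \{u,v\}\in E\rangle$, where $\mathrm{prod}(u,v,n)$ is the prefix of length $n$ of $uvuv\cdots$. An EAFC system has all labels even and among any three pairwise adjacent vertices at least two of the three edges have label $2$. For $S\subseteq V$, $G_S=\langle S\rangle$. The normalizer is $N_G(G_S)=\{g\in G\mid gG_Sg^{-1}=G_S\}$ and the quasi-centralizer is $QZ_G(G_S)=\{g\in G\mid gS=Sg\}$ (equality of subsets of $G$). *)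

theory Defs
  imports "HOL-Algebra.Algebra"
begin

definition artin_system :: "'v set \<Rightarrow> 'v set set \<Rightarrow> ('v set \<Rightarrow> nat) \<Rightarrow> bool" where
  "artin_system V E m \<longleftrightarrow>
     (\<forall>e\<in>E. \<exists>u v. e = {u, v} \<and> u \<noteq> v \<and> u \<in> V \<and> v \<in> V) \<and>
     (\<forall>e\<in>E. m e \<ge> 2)"

definition EAFC :: "'v set \<Rightarrow> 'v set set \<Rightarrow> ('v set \<Rightarrow> nat) \<Rightarrow> bool" where
  "EAFC V E m \<longleftrightarrow> artin_system V E m \<and>
     (\<forall>e\<in>E. even (m e)) \<and>
     (\<forall>a\<in>V. \<forall>b\<in>V. \<forall>c\<in>V. a \<noteq> b \<and> b \<noteq> c \<and> a \<noteq> c \<and>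
        {a,b} \<in> E \<and> {b,c} \<in> E \<and> {a,c} \<in> E \<longrightarrow>
        card {e \<in> {{a,b},{b,c},{a,c}}. m e = 2} \<ge> 2)"

text \<open>A letter (v, True) is the generator v, (v, False) is its inverse.\<close>
type_synonym 'v word = "('v \<times> bool) list"

definition alt_prod :: "'v \<Rightarrow> 'v \<Rightarrow> nat \<Rightarrow> 'v word" where
  "alt_prod u v n = map (\<lambda>i. if even i then (u, True) else (v, True)) [0..<n]"

definition word_inv :: "'v word \<Rightarrow> 'v word" where
  "word_inv w = rev (map (\<lambda>(a, b). (a, \<not> b)) w)"

inductive artin_eq :: "'v set \<Rightarrow> 'v set set \<Rightarrow> ('v set \<Rightarrow> nat) \<Rightarrow> 'v word \<Rightarrow> 'v word \<Rightarrow> bool"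
  for V E m where
  refl: "w \<in> lists (V \<times> UNIV) \<Longrightarrow> artin_eq V E m w w"
| cancel: "x \<in> lists (V \<times> UNIV) \<Longrightarrow> y \<in> lists (V \<times> UNIV) \<Longrightarrow> a \<in> V \<Longrightarrow>
     artin_eq V E m (x @ [(a, b), (a, \<not> b)] @ y) (x @ y)"
| braid: "x \<in> lists (V \<times> UNIV) \<Longrightarrow> y \<in> lists (V \<times> UNIV) \<Longrightarrow> {u, v} \<in> E \<Longrightarrow>
     artin_eq V E m (x @ alt_prod u v (m {u, v}) @ y) (x @ alt_prod v u (m {u, v}) @ y)"
| sym: "artin_eq V E m w w' \<Longrightarrow> artin_eq V E m w' w"
| trans: "artin_eq V E m w w' \<Longrightarrow> artin_eq V E m w' w'' \<Longrightarrow> artin_eq V E m w w''"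

definition artin_class :: "'v set \<Rightarrow> 'v set set \<Rightarrow> ('v set \<Rightarrow> nat) \<Rightarrow> 'v word \<Rightarrow> 'v word set" where
  "artin_class V E m w = {w'. artin_eq V E m w w'}"

definition artin_group :: "'v set \<Rightarrow> 'v set set \<Rightarrow> ('v set \<Rightarrow> nat) \<Rightarrow> 'v word set monoid" where
  "artin_group V E m =
     \<lparr> carrier = artin_class V E m ` lists (V \<times> UNIV),
       monoid.mult = (\<lambda>A B. \<Union>{artin_class V E m (x @ y) | x y. x \<in> A \<and> y \<in> B}),
       one = artin_class V E m [] \<rparr>"

definition artin_gen :: "'v set \<Rightarrow> 'v set set \<Rightarrow> ('v set \<Rightarrow> nat) \<Rightarrow> 'v \<Rightarrow> 'v word set" where
  "artin_gen V E m s = artin_class V E m [(s, True)]"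

definition parabolic :: "'v set \<Rightarrow> 'v set set \<Rightarrow> ('v set \<Rightarrow> nat) \<Rightarrow> 'v set \<Rightarrow> 'v word set set" where
  "parabolic V E m S = generate (artin_group V E m) (artin_gen V E m ` S)"

definition quasi_centralizer :: "'v set \<Rightarrow> 'v set set \<Rightarrow> ('v set \<Rightarrow> nat) \<Rightarrow> 'v set \<Rightarrow> 'v word set set" where
  "quasi_centralizer V E m S =
     {g \<in> carrier (artin_group V E m).
        g <#\<^bsub>artin_group V E m\<^esub> (artin_gen V E m ` S)
        = (artin_gen V E m ` S) #>\<^bsub>artin_group V E m\<^esub> g}"

end

theory Submission
  imports Defs
begin

locale asys =
  fixes V :: "'v set" and E :: "'v set set" and m :: "'v set \<Rightarrow> nat"
  assumes sys: "artin_system V E m"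
    and evn: "\<forall>e\<in>E. even (m e)"
begin

abbreviation L where "L \<equiv> lists (V \<times> (UNIV::bool set))"
abbreviation eq where "eq \<equiv> artin_eq V E m"
abbreviation cls where "cls \<equiv> artin_class V E m"
abbreviation GG where "GG \<equiv> artin_group V E m"

lemma edge_V: "{u,v} \<in> E \<Longrightarrow> u \<in> V \<and> v \<in> V \<and> u \<noteq> v"
  using sys unfolding artin_system_def by (auto simp: doubleton_eq_iff)

lemma alt_prod_L: "u \<in> V \<Longrightarrow> v \<in> V \<Longrightarrow> alt_prod u v n \<in> L"
  unfolding alt_prod_def by auto

lemma eq_L: "eq w w' \<Longrightarrow> w \<in> L \<and> w' \<in> L"
  by (induction rule: artin_eq.induct) (auto dest!: edge_V simp: alt_prod_def split: if_splits)

lemma eq_refl: "w \<in> L \<Longrightarrow> eq w w" by (rule artin_eq.refl)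

lemma eq_app_l: "eq w w' \<Longrightarrow> x \<in> L \<Longrightarrow> eq (x @ w) (x @ w')"
proof (induction rule: artin_eq.induct)
  case (refl w) then show ?case by (intro artin_eq.refl) auto
next
  case (cancel x0 y a b) then show ?case
    using artin_eq.cancel[of "x @ x0" V y a E m b] by auto
next
  case (braid x0 y u v) then show ?case
    using artin_eq.braid[of "x @ x0" V y u v E m] by auto
next
  case (sym w w') then show ?case by (blast intro: artin_eq.sym)
next
  case (trans w w' w'') then show ?case by (blast intro: artin_eq.trans)
qed

lemma eq_app_r: "eq w w' \<Longrightarrow> x \<in> L \<Longrightarrow> eq (w @ x) (w' @ x)"
proof (induction rule: artin_eq.induct)
  case (refl w) then show ?case by (intro artin_eq.refl) auto
next
  case (cancel x0 y a b) then show ?case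
    using artin_eq.cancel[of x0 V "y @ x" a E m b] by auto
next
  case (braid x0 y u v) then show ?case
    using artin_eq.braid[of x0 V "y @ x" u v E m] by auto
next
  case (sym w w') then show ?case by (blast intro: artin_eq.sym)
next
  case (trans w w' w'') then show ?case by (blast intro: artin_eq.trans)
qed

lemma eq_app: "eq w w' \<Longrightarrow> eq x x' \<Longrightarrow> eq (w @ x) (w' @ x')"
  by (meson artin_eq.trans eq_L eq_app_l eq_app_r)

lemma cls_eqI: "eq w w' \<Longrightarrow> cls w = cls w'"
  unfolding artin_class_def by (auto intro: artin_eq.sym artin_eq.trans)

lemma cls_eq_iff: "w \<in> L \<Longrightarrow> cls w = cls w' \<longleftrightarrow> eq w w'"
proof
  assume w: "w \<in> L" and "cls w = cls w'"
  then have "w \<in> cls w'" unfolding artin_class_def by (auto intro: artin_eq.refl)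
  then show "eq w w'" unfolding artin_class_def by (auto intro: artin_eq.sym)
qed (rule cls_eqI)

lemma mult_cls: "w \<in> L \<Longrightarrow> x \<in> L \<Longrightarrow> cls w \<otimes>\<^bsub>GG\<^esub> cls x = cls (w @ x)"
proof -
  assume w: "w \<in> L" and x: "x \<in> L"
  have "\<Union>{cls (a @ b) | a b. a \<in> cls w \<and> b \<in> cls x} = cls (w @ x)"
  proof -
    have "{cls (a @ b) | a b. a \<in> cls w \<and> b \<in> cls x} = {cls (w @ x)}"
    proof
      show "{cls (a @ b) | a b. a \<in> cls w \<and> b \<in> cls x} \<subseteq> {cls (w @ x)}"
        unfolding artin_class_def
        by clarify (metis (no_types) artin_class_def artin_eq.sym cls_eqI eq_app)
      have "w \<in> cls w" "x \<in> cls x" using w x unfolding artin_class_def by (auto intro: artin_eq.refl)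
      then show "{cls (w @ x)} \<subseteq> {cls (a @ b) | a b. a \<in> cls w \<and> b \<in> cls x}" by blast
    qed
    then show ?thesis by simp
  qed
  then show ?thesis unfolding artin_group_def by simp
qed

lemma mult_cls': "\<forall>a\<in>set w. a \<in> V \<times> UNIV \<Longrightarrow> \<forall>a\<in>set x. a \<in> V \<times> UNIV \<Longrightarrow> cls w \<otimes>\<^bsub>GG\<^esub> cls x = cls (w @ x)"
  using mult_cls by (simp add: in_lists_conv_set)

lemma word_inv_L: "w \<in> L \<Longrightarrow> word_inv w \<in> L"
  unfolding word_inv_def by auto

lemma word_inv_cancel: "w \<in> L \<Longrightarrow> eq (word_inv w @ w) []"
proof (induction w)
  case Nil then show ?case by (simp add: word_inv_def artin_eq.refl)
next
  case (Cons a w)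
  obtain v b where a: "a = (v, b)" by (cases a)
  have wl: "w \<in> L" "v \<in> V" using Cons a by auto
  have wi: "word_inv (a # w) = word_inv w @ [(v, \<not> b)]" using a by (simp add: word_inv_def)
  have "eq (word_inv w @ [(v, \<not> b), (v, \<not> \<not> b)] @ w) (word_inv w @ w)"
    by (rule artin_eq.cancel) (use wl word_inv_L in auto)
  then have "eq (word_inv (a # w) @ a # w) (word_inv w @ w)" using wi a by simp
  then show ?case using Cons wl by (blast intro: artin_eq.trans)
qed

lemma carrier_GG: "carrier GG = cls ` L" unfolding artin_group_def by simp
lemma one_GG: "\<one>\<^bsub>GG\<^esub> = cls []" unfolding artin_group_def by simp

lemma group_GG: "group GG"
proof (rule groupI)
  fix x y assume "x \<in> carrier GG" "y \<in> carrier GG"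
  then obtain a b where "a \<in> L" "b \<in> L" "x = cls a" "y = cls b" by (auto simp: carrier_GG)
  then show "x \<otimes>\<^bsub>GG\<^esub> y \<in> carrier GG"
    unfolding carrier_GG by (simp only: mult_cls) (intro imageI append_in_lists_conv[THEN iffD2] conjI)
next
  show "\<one>\<^bsub>GG\<^esub> \<in> carrier GG" by (auto simp: carrier_GG one_GG)
next
  fix x y z assume "x \<in> carrier GG" "y \<in> carrier GG" "z \<in> carrier GG"
  then obtain a b c where "a \<in> L" "b \<in> L" "c \<in> L" "x = cls a" "y = cls b" "z = cls c"
    by (auto simp: carrier_GG)
  then show "x \<otimes>\<^bsub>GG\<^esub> y \<otimes>\<^bsub>GG\<^esub> z = x \<otimes>\<^bsub>GG\<^esub> (y \<otimes>\<^bsub>GG\<^esub> z)"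
    by (simp add: mult_cls)
next
  fix x assume "x \<in> carrier GG"
  then show "\<one>\<^bsub>GG\<^esub> \<otimes>\<^bsub>GG\<^esub> x = x" by (auto simp: carrier_GG one_GG mult_cls')
next
  fix x assume "x \<in> carrier GG"
  then obtain w where w: "w \<in> L" "x = cls w" by (auto simp: carrier_GG)
  then have "cls (word_inv w) \<in> carrier GG" "cls (word_inv w) \<otimes>\<^bsub>GG\<^esub> x = \<one>\<^bsub>GG\<^esub>"
    using word_inv_L[OF w(1)] word_inv_cancel[OF w(1)] cls_eqI unfolding carrier_GG one_GG
    by (simp_all add: mult_cls)
  then show "\<exists>y\<in>carrier GG. y \<otimes>\<^bsub>GG\<^esub> x = \<one>\<^bsub>GG\<^esub>" by blast
qed

lemma inv_cls: "w \<in> L \<Longrightarrow> inv\<^bsub>GG\<^esub> (cls w) = cls (word_inv w)"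
proof -
  assume w: "w \<in> L"
  have "cls (word_inv w) \<otimes>\<^bsub>GG\<^esub> cls w = \<one>\<^bsub>GG\<^esub>"
    using w word_inv_L word_inv_cancel cls_eqI by (simp add: mult_cls one_GG)
  then show ?thesis
    using group.inv_equality[OF group_GG] w word_inv_L unfolding carrier_GG by blast
qed

lemma alt_prod_Suc: "alt_prod u v (Suc n) = alt_prod u v n @ [if even n then (u, True) else (v, True)]"
  unfolding alt_prod_def by simp

lemma alt_sum: "sum_list (map (f :: 'v \<times> bool \<Rightarrow> int) (alt_prod u v n))
   = int ((n+1) div 2) * f (u,True) + int (n div 2) * f (v,True)"
proof (induction n)
  case 0 then show ?case by (simp add: alt_prod_def)
next
  case (Suc n)
  show ?case
  proof (cases "even n")
    case True
    then have "(Suc n + 1) div 2 = (n+1) div 2 + 1" "Suc n div 2 = n div 2" by presburger+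
    then show ?thesis using Suc True by (simp add: alt_prod_Suc algebra_simps)
  next
    case False
    then have "(Suc n + 1) div 2 = (n+1) div 2" "Suc n div 2 = n div 2 + 1" by presburger+
    then show ?thesis using Suc False by (simp add: alt_prod_Suc algebra_simps)
  qed
qed

definition esum :: "'v \<Rightarrow> 'v word \<Rightarrow> int" where
  "esum s w = sum_list (map (\<lambda>(a,b). if a = s then (if b then 1 else -1) else 0) w)"

lemma esum_inv: "eq w w' \<Longrightarrow> esum s w = esum s w'"
proof (induction rule: artin_eq.induct)
  case (braid x y u v)
  have "even (m {u,v})" using evn braid by auto
  then have "(m {u,v} + 1) div 2 = m {u,v} div 2" by presburger
  then show ?case unfolding esum_def by (simp add: alt_sum[where f = "\<lambda>(a,b). if a = s then (if b then 1 else -1) else 0"])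
qed (auto simp: esum_def)

lemma filter_alt: "filter Q (alt_prod u v n) =
  (if Q (u,True) \<and> Q (v,True) then alt_prod u v n
   else if Q (u,True) then replicate ((n+1) div 2) (u,True)
   else if Q (v,True) then replicate (n div 2) (v,True) else [])"
proof (induction n)
  case 0 then show ?case by (simp add: alt_prod_def)
next
  case (Suc n)
  show ?case
  proof (cases "even n")
    case True
    then have "(Suc n + 1) div 2 = Suc ((n+1) div 2)" "Suc n div 2 = n div 2" by presburger+
    then show ?thesis using Suc True by (simp add: alt_prod_Suc replicate_append_same)
  next
    case False
    then have "(Suc n + 1) div 2 = (n+1) div 2" "Suc n div 2 = Suc (n div 2)" by presburger+
    then show ?thesis using Suc False by (simp add: alt_prod_Suc replicate_append_same)
  qed
qed

abbreviation inT :: "'v set \<Rightarrow> 'v \<times> bool \<Rightarrow> bool" where "inT T \<equiv> (\<lambda>(a,b). a \<in> T)"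

lemma filter_L: "w \<in> L \<Longrightarrow> filter P w \<in> L" by auto

lemma filter_inv: "eq w w' \<Longrightarrow> eq (filter (inT T) w) (filter (inT T) w')"
proof (induction rule: artin_eq.induct)
  case (refl w) then show ?case by (intro artin_eq.refl) auto
next
  case (cancel x y a b)
  show ?case
  proof (cases "a \<in> T")
    case True
    have "filter (inT T) x \<in> L" "filter (inT T) y \<in> L" using cancel by auto
    then show ?thesis using artin_eq.cancel[of "filter (inT T) x" V "filter (inT T) y" a E m b] cancel True
      by simp
  next
    case False
    have "filter (inT T) x @ filter (inT T) y \<in> L" using cancel by auto
    then show ?thesis using False by (simp add: artin_eq.refl)
  qed
next
  case (braid x y u v)
  have uv: "u \<in> V" "v \<in> V" "u \<noteq> v" using edge_V braid by auto
  have ev: "even (m {u,v})" using evn braid by auto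
  then have ev2: "(m {u,v} + 1) div 2 = m {u,v} div 2" by presburger
  have fx: "filter (inT T) x \<in> L" "filter (inT T) y \<in> L" using braid by auto
  have e2: "{v,u} = {u,v}" by auto
  have "eq (filter (inT T) (alt_prod u v (m {u, v}))) (filter (inT T) (alt_prod v u (m {u, v})))"
  proof (cases "u \<in> T \<and> v \<in> T")
    case True
    then show ?thesis using artin_eq.braid[of "[]" V "[]" u v E m] braid by (simp add: filter_alt)
  next
    case False
    have "filter (inT T) (alt_prod u v (m {u, v})) = filter (inT T) (alt_prod v u (m {u, v}))"
      using False ev2 by (simp add: filter_alt)
    moreover have "filter (inT T) (alt_prod v u (m {u, v})) \<in> L"
      using uv by (intro filter_L alt_prod_L)
    ultimately show ?thesis by (simp add: artin_eq.refl)
  qed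
  then show ?case using fx by (simp add: eq_app artin_eq.refl)
next
  case (sym w w') then show ?case by (blast intro: artin_eq.sym)
next
  case (trans w w' w'') then show ?case by (blast intro: artin_eq.trans)
qed

definition rho :: "'v set \<Rightarrow> 'v word set \<Rightarrow> 'v word set" where
  "rho T A = \<Union>{cls (filter (inT T) w) | w. w \<in> A}"

lemma rho_cls: "w \<in> L \<Longrightarrow> rho T (cls w) = cls (filter (inT T) w)"
proof -
  assume w: "w \<in> L"
  have "{cls (filter (inT T) a) | a. a \<in> cls w} = {cls (filter (inT T) w)}"
  proof
    show "{cls (filter (inT T) a) | a. a \<in> cls w} \<subseteq> {cls (filter (inT T) w)}"
      unfolding artin_class_def
      by clarify (metis (no_types) artin_class_def artin_eq.sym cls_eqI filter_inv)
    have "w \<in> cls w" using w unfolding artin_class_def by (auto intro: artin_eq.refl)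
    then show "{cls (filter (inT T) w)} \<subseteq> {cls (filter (inT T) a) | a. a \<in> cls w}" by blast
  qed
  then show ?thesis unfolding rho_def by simp
qed

sublocale group GG by (rule group_GG)

lemma invc1 [simp]: "x \<in> carrier GG \<Longrightarrow> y \<in> carrier GG \<Longrightarrow> inv\<^bsub>GG\<^esub> x \<otimes>\<^bsub>GG\<^esub> (x \<otimes>\<^bsub>GG\<^esub> y) = y"
  by (simp add: m_assoc[symmetric])
lemma invc2 [simp]: "x \<in> carrier GG \<Longrightarrow> y \<in> carrier GG \<Longrightarrow> x \<otimes>\<^bsub>GG\<^esub> (inv\<^bsub>GG\<^esub> x \<otimes>\<^bsub>GG\<^esub> y) = y"
  by (simp add: m_assoc[symmetric])

lemma rho_hom: "x \<in> carrier GG \<Longrightarrow> y \<in> carrier GG \<Longrightarrow>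
   rho T (x \<otimes>\<^bsub>GG\<^esub> y) = rho T x \<otimes>\<^bsub>GG\<^esub> rho T y"
proof -
  assume "x \<in> carrier GG" "y \<in> carrier GG"
  then obtain a b where ab: "a \<in> L" "b \<in> L" "x = cls a" "y = cls b" by (auto simp: carrier_GG)
  then have "filter (inT T) a \<in> L" "filter (inT T) b \<in> L" by auto
  with ab show ?thesis by (simp add: mult_cls rho_cls)
qed

lemma rho_carrier: "x \<in> carrier GG \<Longrightarrow> rho T x \<in> carrier GG"
proof -
  assume "x \<in> carrier GG"
  then obtain a where ab: "a \<in> L" "x = cls a" by (auto simp: carrier_GG)
  then have "filter (inT T) a \<in> L" by auto
  with ab show ?thesis by (simp add: rho_cls carrier_GG)
qed

lemma rho_one: "rho T \<one>\<^bsub>GG\<^esub> = \<one>\<^bsub>GG\<^esub>"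
  by (simp add: one_GG rho_cls)

lemma rho_inv: "x \<in> carrier GG \<Longrightarrow> rho T (inv\<^bsub>GG\<^esub> x) = inv\<^bsub>GG\<^esub> (rho T x)"
proof -
  assume x: "x \<in> carrier GG"
  have "rho T (inv\<^bsub>GG\<^esub> x) \<otimes>\<^bsub>GG\<^esub> rho T x = \<one>\<^bsub>GG\<^esub>"
    using x by (simp add: rho_hom[symmetric] rho_one)
  then show ?thesis using x by (simp add: rho_carrier inv_equality)
qed

lemma gen_carrier: "s \<in> V \<Longrightarrow> artin_gen V E m s \<in> carrier GG"
  unfolding artin_gen_def carrier_GG by auto

lemma H_sub: "T \<subseteq> V \<Longrightarrow> artin_gen V E m ` T \<subseteq> carrier GG"
  using gen_carrier by auto

lemma rho_H: assumes T: "T \<subseteq> V" shows "x \<in> parabolic V E m T \<Longrightarrow> rho T x = x"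
  unfolding parabolic_def
proof (induction rule: generate.induct)
  case one then show ?case by (rule rho_one)
next
  case (incl h)
  then obtain s where "s \<in> T" "h = artin_gen V E m s" by auto
  then show ?case using incl T by (auto simp: artin_gen_def rho_cls)
next
  case (inv h)
  then obtain s where s: "s \<in> T" "h = artin_gen V E m s" by auto
  then have "rho T h = h" using inv T by (auto simp: artin_gen_def rho_cls)
  have "h \<in> carrier GG" using s T gen_carrier by auto
  then show ?case using \<open>rho T h = h\<close> by (simp add: rho_inv)
next
  case (eng h1 h2)
  have "h1 \<in> carrier GG" "h2 \<in> carrier GG"
    using eng generate_incl[OF H_sub[OF T]] by auto
  then show ?case using eng by (simp add: rho_hom)
qed

lemma word_H: "T \<subseteq> V \<Longrightarrow> w \<in> lists (T \<times> UNIV) \<Longrightarrow> cls w \<in> parabolic V E m T"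
proof (induction w)
  case Nil then show ?case unfolding parabolic_def using generate.one[of GG] by (simp add: one_GG)
next
  case (Cons a w)
  obtain s b where a: "a = (s,b)" by (cases a)
  have sV: "s \<in> T" "s \<in> V" using Cons a by auto
  have wL: "w \<in> L" using Cons by auto
  have "cls [a] \<in> parabolic V E m T"
  proof (cases b)
    case True
    then show ?thesis using sV a unfolding parabolic_def artin_gen_def by (auto intro: generate.incl)
  next
    case False
    have "inv\<^bsub>GG\<^esub> (artin_gen V E m s) = cls [a]"
      using sV a False by (simp add: artin_gen_def inv_cls word_inv_def)
    then show ?thesis using sV unfolding parabolic_def by (metis generate.inv imageI)
  qed
  moreover have "cls w \<in> parabolic V E m T" using Cons by auto
  ultimately have "cls [a] \<otimes>\<^bsub>GG\<^esub> cls w \<in> parabolic V E m T"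
    unfolding parabolic_def by (rule generate.eng)
  then show ?case using sV a wL by (simp add: mult_cls)
qed

lemma rho_in_H: "T \<subseteq> V \<Longrightarrow> x \<in> carrier GG \<Longrightarrow> rho T x \<in> parabolic V E m T"
proof -
  assume T: "T \<subseteq> V" and "x \<in> carrier GG"
  then obtain a where ab: "a \<in> L" "x = cls a" by (auto simp: carrier_GG)
  then have "filter (inT T) a \<in> lists (T \<times> UNIV)" by auto
  with ab T show ?thesis by (simp add: rho_cls word_H)
qed

abbreviation gen where "gen \<equiv> artin_gen V E m"

lemma gs_comm:
  assumes S: "S \<subseteq> V" and g: "g \<in> carrier GG" and s: "s \<in> S"
    and q: "g <#\<^bsub>GG\<^esub> (gen ` S) = (gen ` S) #>\<^bsub>GG\<^esub> g"
  shows "g \<otimes>\<^bsub>GG\<^esub> gen s = gen s \<otimes>\<^bsub>GG\<^esub> g"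
proof -
  have "g \<otimes>\<^bsub>GG\<^esub> gen s \<in> g <#\<^bsub>GG\<^esub> (gen ` S)" using s unfolding l_coset_def by auto
  then have "g \<otimes>\<^bsub>GG\<^esub> gen s \<in> (gen ` S) #>\<^bsub>GG\<^esub> g" using q by simp
  then obtain t where t: "t \<in> S" "g \<otimes>\<^bsub>GG\<^esub> gen s = gen t \<otimes>\<^bsub>GG\<^esub> g"
    unfolding r_coset_def by auto
  obtain w where w: "w \<in> L" "g = cls w" using g by (auto simp: carrier_GG)
  have sV: "s \<in> V" "t \<in> V" using S s t by auto
  have "cls (w @ [(s,True)]) = cls ([(t,True)] @ w)"
    using t w sV by (simp add: artin_gen_def mult_cls)
  then have "eq (w @ [(s,True)]) ([(t,True)] @ w)" using w sV by (subst (asm) cls_eq_iff) auto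
  then have "esum s (w @ [(s,True)]) = esum s ([(t,True)] @ w)" by (rule esum_inv)
  then have "t = s" by (simp add: esum_def split: if_splits)
  then show ?thesis using t by simp
qed

lemma part1:
  assumes S: "S \<subseteq> V"
  shows "quasi_centralizer V E m S = carrier GG \<inter> (\<Inter>s\<in>S. quasi_centralizer V E m {s})"
proof (intro equalityI subsetI)
  fix g assume "g \<in> quasi_centralizer V E m S"
  then have g: "g \<in> carrier GG" and q: "g <#\<^bsub>GG\<^esub> (gen ` S) = (gen ` S) #>\<^bsub>GG\<^esub> g"
    unfolding quasi_centralizer_def by auto
  have "g \<in> quasi_centralizer V E m {s}" if s: "s \<in> S" for s
    using gs_comm[OF S g s q] g unfolding quasi_centralizer_def l_coset_def r_coset_def by auto
  then show "g \<in> carrier GG \<inter> (\<Inter>s\<in>S. quasi_centralizer V E m {s})" using g by auto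
next
  fix g assume a: "g \<in> carrier GG \<inter> (\<Inter>s\<in>S. quasi_centralizer V E m {s})"
  then have g: "g \<in> carrier GG" by auto
  have c: "g \<otimes>\<^bsub>GG\<^esub> gen s = gen s \<otimes>\<^bsub>GG\<^esub> g" if s: "s \<in> S" for s
  proof -
    have "g <#\<^bsub>GG\<^esub> (gen ` {s}) = (gen ` {s}) #>\<^bsub>GG\<^esub> g"
      using a s unfolding quasi_centralizer_def by auto
    then show ?thesis unfolding l_coset_def r_coset_def by auto
  qed
  have "g <#\<^bsub>GG\<^esub> (gen ` S) = (gen ` S) #>\<^bsub>GG\<^esub> g"
    unfolding l_coset_def r_coset_def using c by auto
  then show "g \<in> quasi_centralizer V E m S" using g unfolding quasi_centralizer_def by auto
qed

lemma norm_D: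
  assumes Hc: "H \<subseteq> carrier GG" and n: "g \<in> normalizer GG H"
  shows "g \<in> carrier GG" "\<And>h. h \<in> H \<Longrightarrow> g \<otimes>\<^bsub>GG\<^esub> h \<otimes>\<^bsub>GG\<^esub> inv\<^bsub>GG\<^esub> g \<in> H"
    "\<And>h. h \<in> H \<Longrightarrow> inv\<^bsub>GG\<^esub> g \<otimes>\<^bsub>GG\<^esub> h \<otimes>\<^bsub>GG\<^esub> g \<in> H"
proof -
  have g: "g \<in> carrier GG" and e: "g <#\<^bsub>GG\<^esub> H #>\<^bsub>GG\<^esub> inv\<^bsub>GG\<^esub> g = H"
    using n Hc unfolding normalizer_def stabilizer_def by auto
  show "g \<in> carrier GG" by fact
  fix h assume h: "h \<in> H"
  have "g \<otimes>\<^bsub>GG\<^esub> h \<otimes>\<^bsub>GG\<^esub> inv\<^bsub>GG\<^esub> g \<in> g <#\<^bsub>GG\<^esub> H #>\<^bsub>GG\<^esub> inv\<^bsub>GG\<^esub> g"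
    using h unfolding l_coset_def r_coset_def by auto
  then show "g \<otimes>\<^bsub>GG\<^esub> h \<otimes>\<^bsub>GG\<^esub> inv\<^bsub>GG\<^esub> g \<in> H" using e by simp
  have "h \<in> g <#\<^bsub>GG\<^esub> H #>\<^bsub>GG\<^esub> inv\<^bsub>GG\<^esub> g" using e h by simp
  then obtain h' where h': "h' \<in> H" "h = g \<otimes>\<^bsub>GG\<^esub> h' \<otimes>\<^bsub>GG\<^esub> inv\<^bsub>GG\<^esub> g"
    unfolding l_coset_def r_coset_def by auto
  have "h' \<in> carrier GG" using h' Hc by auto
  then have "inv\<^bsub>GG\<^esub> g \<otimes>\<^bsub>GG\<^esub> h \<otimes>\<^bsub>GG\<^esub> g = h'" using h' g by (simp add: m_assoc)
  then show "inv\<^bsub>GG\<^esub> g \<otimes>\<^bsub>GG\<^esub> h \<otimes>\<^bsub>GG\<^esub> g \<in> H" using h' by simp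
qed

lemma norm_I:
  assumes Hc: "H \<subseteq> carrier GG" and g: "g \<in> carrier GG"
    and c1: "\<And>h. h \<in> H \<Longrightarrow> g \<otimes>\<^bsub>GG\<^esub> h \<otimes>\<^bsub>GG\<^esub> inv\<^bsub>GG\<^esub> g \<in> H"
    and c2: "\<And>h. h \<in> H \<Longrightarrow> inv\<^bsub>GG\<^esub> g \<otimes>\<^bsub>GG\<^esub> h \<otimes>\<^bsub>GG\<^esub> g \<in> H"
  shows "g \<in> normalizer GG H"
proof -
  have "g <#\<^bsub>GG\<^esub> H #>\<^bsub>GG\<^esub> inv\<^bsub>GG\<^esub> g = H"
  proof (intro equalityI subsetI)
    fix x assume "x \<in> g <#\<^bsub>GG\<^esub> H #>\<^bsub>GG\<^esub> inv\<^bsub>GG\<^esub> g"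
    then obtain h where "h \<in> H" "x = g \<otimes>\<^bsub>GG\<^esub> h \<otimes>\<^bsub>GG\<^esub> inv\<^bsub>GG\<^esub> g"
      unfolding l_coset_def r_coset_def by auto
    then show "x \<in> H" using c1 by simp
  next
    fix x assume x: "x \<in> H"
    then have "inv\<^bsub>GG\<^esub> g \<otimes>\<^bsub>GG\<^esub> x \<otimes>\<^bsub>GG\<^esub> g \<in> H" by (rule c2)
    moreover have "x = g \<otimes>\<^bsub>GG\<^esub> (inv\<^bsub>GG\<^esub> g \<otimes>\<^bsub>GG\<^esub> x \<otimes>\<^bsub>GG\<^esub> g) \<otimes>\<^bsub>GG\<^esub> inv\<^bsub>GG\<^esub> g"
      using x Hc g by (simp add: subsetD m_assoc)
    ultimately show "x \<in> g <#\<^bsub>GG\<^esub> H #>\<^bsub>GG\<^esub> inv\<^bsub>GG\<^esub> g"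
      unfolding l_coset_def r_coset_def by auto
  qed
  then show ?thesis using g Hc unfolding normalizer_def stabilizer_def by auto
qed

lemma part2:
  assumes S: "S \<subseteq> V" and n: "g \<in> normalizer GG (parabolic V E m S)"
  shows "\<exists>g'\<in>normalizer GG (parabolic V E m S).
             g' <#\<^bsub>GG\<^esub> parabolic V E m S = g <#\<^bsub>GG\<^esub> parabolic V E m S \<and>
             (\<forall>h\<in>parabolic V E m S. g' \<otimes>\<^bsub>GG\<^esub> h = h \<otimes>\<^bsub>GG\<^esub> g')"
proof -
  let ?H = "parabolic V E m S"
  have sg: "subgroup ?H GG" unfolding parabolic_def by (rule generate_is_subgroup[OF H_sub[OF S]])
  then have Hc: "?H \<subseteq> carrier GG" by (rule subgroup.subset)
  have g: "g \<in> carrier GG" using norm_D[OF Hc n] by simp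
  define r where "r = rho S g"
  have rH: "r \<in> ?H" unfolding r_def by (rule rho_in_H[OF S g])
  have rc: "r \<in> carrier GG" using rH Hc by auto
  have rr: "rho S r = r" using rho_H[OF S rH] .
  define g' where "g' = inv\<^bsub>GG\<^esub> r \<otimes>\<^bsub>GG\<^esub> g"
  have g'c: "g' \<in> carrier GG" unfolding g'_def using rc g by simp
  have ig': "inv\<^bsub>GG\<^esub> g' = inv\<^bsub>GG\<^esub> g \<otimes>\<^bsub>GG\<^esub> r" unfolding g'_def using rc g by (simp add: inv_mult_group)
  have g'n: "g' \<in> normalizer GG ?H"
  proof (rule norm_I[OF Hc g'c])
    fix h assume h: "h \<in> ?H"
    then have hc: "h \<in> carrier GG" using Hc by auto
    have "g \<otimes>\<^bsub>GG\<^esub> h \<otimes>\<^bsub>GG\<^esub> inv\<^bsub>GG\<^esub> g \<in> ?H" using norm_D(2)[OF Hc n h] .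
    then have "inv\<^bsub>GG\<^esub> r \<otimes>\<^bsub>GG\<^esub> (g \<otimes>\<^bsub>GG\<^esub> h \<otimes>\<^bsub>GG\<^esub> inv\<^bsub>GG\<^esub> g) \<otimes>\<^bsub>GG\<^esub> r \<in> ?H"
      using rH sg by (meson subgroup.m_closed subgroup.m_inv_closed)
    then show "g' \<otimes>\<^bsub>GG\<^esub> h \<otimes>\<^bsub>GG\<^esub> inv\<^bsub>GG\<^esub> g' \<in> ?H"
      using ig' g rc hc unfolding g'_def by (simp add: m_assoc)
  next
    fix h assume h: "h \<in> ?H"
    then have hc: "h \<in> carrier GG" using Hc by auto
    have "r \<otimes>\<^bsub>GG\<^esub> h \<otimes>\<^bsub>GG\<^esub> inv\<^bsub>GG\<^esub> r \<in> ?H"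
      using rH h sg by (meson subgroup.m_closed subgroup.m_inv_closed)
    then have "inv\<^bsub>GG\<^esub> g \<otimes>\<^bsub>GG\<^esub> (r \<otimes>\<^bsub>GG\<^esub> h \<otimes>\<^bsub>GG\<^esub> inv\<^bsub>GG\<^esub> r) \<otimes>\<^bsub>GG\<^esub> g \<in> ?H"
      by (rule norm_D(3)[OF Hc n])
    then show "inv\<^bsub>GG\<^esub> g' \<otimes>\<^bsub>GG\<^esub> h \<otimes>\<^bsub>GG\<^esub> g' \<in> ?H"
      using ig' g rc hc unfolding g'_def by (simp add: m_assoc)
  qed
  have coset: "g' <#\<^bsub>GG\<^esub> ?H = g <#\<^bsub>GG\<^esub> ?H"
  proof (intro equalityI subsetI)
    fix x assume "x \<in> g' <#\<^bsub>GG\<^esub> ?H"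
    then obtain h where h: "h \<in> ?H" "x = g' \<otimes>\<^bsub>GG\<^esub> h" unfolding l_coset_def by auto
    have hc: "h \<in> carrier GG" using h Hc by auto
    have "inv\<^bsub>GG\<^esub> g \<otimes>\<^bsub>GG\<^esub> inv\<^bsub>GG\<^esub> r \<otimes>\<^bsub>GG\<^esub> g \<in> ?H"
      using norm_D(3)[OF Hc n] rH sg by (meson subgroup.m_inv_closed)
    then have "inv\<^bsub>GG\<^esub> g \<otimes>\<^bsub>GG\<^esub> inv\<^bsub>GG\<^esub> r \<otimes>\<^bsub>GG\<^esub> g \<otimes>\<^bsub>GG\<^esub> h \<in> ?H"
      using h sg by (meson subgroup.m_closed)
    moreover have "x = g \<otimes>\<^bsub>GG\<^esub> (inv\<^bsub>GG\<^esub> g \<otimes>\<^bsub>GG\<^esub> inv\<^bsub>GG\<^esub> r \<otimes>\<^bsub>GG\<^esub> g \<otimes>\<^bsub>GG\<^esub> h)"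
      using h g rc hc unfolding g'_def by (simp add: m_assoc)
    ultimately show "x \<in> g <#\<^bsub>GG\<^esub> ?H" unfolding l_coset_def by auto
  next
    fix x assume "x \<in> g <#\<^bsub>GG\<^esub> ?H"
    then obtain h where h: "h \<in> ?H" "x = g \<otimes>\<^bsub>GG\<^esub> h" unfolding l_coset_def by auto
    have hc: "h \<in> carrier GG" using h Hc by auto
    have "inv\<^bsub>GG\<^esub> g' \<otimes>\<^bsub>GG\<^esub> r \<otimes>\<^bsub>GG\<^esub> g' \<in> ?H"
      using norm_D(3)[OF Hc g'n] rH by blast
    then have "inv\<^bsub>GG\<^esub> g' \<otimes>\<^bsub>GG\<^esub> r \<otimes>\<^bsub>GG\<^esub> g' \<otimes>\<^bsub>GG\<^esub> h \<in> ?H"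
      using h sg by (meson subgroup.m_closed)
    moreover have "x = g' \<otimes>\<^bsub>GG\<^esub> (inv\<^bsub>GG\<^esub> g' \<otimes>\<^bsub>GG\<^esub> r \<otimes>\<^bsub>GG\<^esub> g' \<otimes>\<^bsub>GG\<^esub> h)"
      using h g rc hc g'c unfolding g'_def by (simp add: m_assoc)
    ultimately show "x \<in> g' <#\<^bsub>GG\<^esub> ?H" unfolding l_coset_def by auto
  qed
  have rg': "rho S g' = \<one>\<^bsub>GG\<^esub>"
    unfolding g'_def using rc g by (simp add: rho_hom rho_inv rr r_def[symmetric])
  have comm: "g' \<otimes>\<^bsub>GG\<^esub> h = h \<otimes>\<^bsub>GG\<^esub> g'" if h: "h \<in> ?H" for h
  proof -
    have hc: "h \<in> carrier GG" using h Hc by auto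
    let ?k = "g' \<otimes>\<^bsub>GG\<^esub> h \<otimes>\<^bsub>GG\<^esub> inv\<^bsub>GG\<^esub> g'"
    have kH: "?k \<in> ?H" using norm_D(2)[OF Hc g'n h] .
    have "rho S ?k = ?k" using rho_H[OF S kH] .
    moreover have "rho S ?k = h"
      using g'c hc rg' rho_H[OF S h] by (simp add: rho_hom rho_inv)
    ultimately have "?k = h" by simp
    then have "?k \<otimes>\<^bsub>GG\<^esub> g' = h \<otimes>\<^bsub>GG\<^esub> g'" by simp
    then show ?thesis using g'c hc by (simp add: m_assoc)
  qed
  show ?thesis using g'n coset comm by blast
qed

end

theorem lemma2p12:
  fixes V :: "'v set" and E :: "'v set set" and m :: "'v set \<Rightarrow> nat" and S :: "'v set"
  defines "G \<equiv> artin_group V E m"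
  assumes "EAFC V E m" and "finite V" and "S \<subseteq> V"
  shows "quasi_centralizer V E m S
           = carrier G \<inter> (\<Inter>s\<in>S. quasi_centralizer V E m {s})
         \<and> (\<forall>g\<in>normalizer G (parabolic V E m S) - parabolic V E m S.
           \<exists>g'\<in>normalizer G (parabolic V E m S).
             g' <#\<^bsub>G\<^esub> parabolic V E m S = g <#\<^bsub>G\<^esub> parabolic V E m S \<and>
             (\<forall>h\<in>parabolic V E m S. g' \<otimes>\<^bsub>G\<^esub> h = h \<otimes>\<^bsub>G\<^esub> g'))"
proof -
  interpret asys V E m using assms(2) unfolding EAFC_def by unfold_locales auto
  show ?thesis unfolding G_def using part1[OF assms(4)] part2[OF assms(4)] by blast
qed

end
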